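(* Let $n\ge2$, let $A_1,\dots,A_n$ be nonzero real $n\times n$ matrices, and let $G_B$ be as in the context. (i) If there is $\lambda>0$ such that $\|A_i-\lambda I_n\|_{\mathrm{op}}\le\lambda/4$ for all $i=1,\dots,n$, then $G_B$ is monotone. (ii) If there is $\lambda>0$ such that $\|A_i-\lambda I_n\|_{\mathrm{op}}<\lambda/4$ for all $i=1,\dots,n$, then $G_B$ is $3$-monotone.
   Context: $B(u,v,w)=\mathrm{diag}[u^TA_1v,\dots,u^TA_nv]\,w$ for $u,v,w\in\mathbb R^n$; $G_B(0)=0$ and $G_B(u)=B(u,u,u)/|u|$ for $u\ne0$, with $|\cdot|$ the Euclidean norm. $\|A\|_{\mathrm{op}}=\max_{|x|=1}|Ax|$. A map $F:\mathbb R^n\to\mathbb R^n$ is monotone if $(F(u)-F(v))\cdot(u-v)\ge0$ for all $u,v$; for $\alpha>0$ it is $\alpha$-monotone if there is $C>0$ with $(F(u)-F(v))\cdot(u-v)\ge C|u-v|^\alpha$ for all $u,v$. *)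

theory Defs
  imports "HOL-Analysis.Analysis"
begin

definition Bmap :: "('n::finite \<Rightarrow> real^'n^'n) \<Rightarrow> real^'n \<Rightarrow> real^'n \<Rightarrow> real^'n \<Rightarrow> real^'n" where
  "Bmap A u v w = (\<chi> i. (u \<bullet> (A i *v v)) * w $ i)"

definition GB :: "('n::finite \<Rightarrow> real^'n^'n) \<Rightarrow> real^'n \<Rightarrow> real^'n" where
  "GB A u = (if u = 0 then 0 else (1 / norm u) *\<^sub>R Bmap A u u u)"

definition op_norm :: "real^'n^'m \<Rightarrow> real" where
  "op_norm M = onorm (\<lambda>x. M *v x)"

definition monotone_map :: "('a::real_inner \<Rightarrow> 'a) \<Rightarrow> bool" where
  "monotone_map F \<longleftrightarrow> (\<forall>u v. (F u - F v) \<bullet> (u - v) \<ge> 0)"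

definition alpha_monotone :: "real \<Rightarrow> ('a::real_inner \<Rightarrow> 'a) \<Rightarrow> bool" where
  "alpha_monotone \<alpha> F \<longleftrightarrow> (\<exists>C>0. \<forall>u v. (F u - F v) \<bullet> (u - v) \<ge> C * norm (u - v) powr \<alpha>)"

end

theory Submission
  imports Defs
begin

lemma opn: assumes "op_norm M \<le> e" shows "norm (M *v x) \<le> e * norm x"
proof -
  have "norm (M *v x) \<le> op_norm M * norm x" unfolding op_norm_def by (rule onorm) simp
  also have "\<dots> \<le> e * norm x" using assms by (simp add: mult_right_mono)
  finally show ?thesis .
qed

lemma qf: assumes "op_norm M \<le> e" shows "\<bar>x \<bullet> (M *v y)\<bar> \<le> e * norm x * norm y"
proof -
  have "\<bar>x \<bullet> (M *v y)\<bar> \<le> norm x * norm (M *v y)" by (rule Cauchy_Schwarz_ineq2)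
  also have "\<dots> \<le> norm x * (e * norm y)" using opn[OF assms] by (simp add: mult_left_mono)
  finally show ?thesis by (simp add: algebra_simps)
qed

lemma cs_abs: "(\<Sum>i\<in>UNIV. \<bar>x$i\<bar> * \<bar>w$i\<bar>) \<le> norm x * norm (w::real^'n)"
proof -
  have "(\<Sum>i\<in>UNIV. \<bar>x$i\<bar> * \<bar>w$i\<bar>) = (\<chi> i. \<bar>x$i\<bar>) \<bullet> (\<chi> i. \<bar>w$i\<bar>)" by (simp add: inner_vec_def)
  also have "\<dots> \<le> norm (\<chi> i. \<bar>x$i\<bar>) * norm (\<chi> i. \<bar>w$i\<bar>)" by (rule norm_cauchy_schwarz)
  also have "norm (\<chi> i. \<bar>x$i\<bar>) = norm x" by (simp add: norm_vec_def)
  also have "norm (\<chi> i. \<bar>w$i\<bar>) = norm w" by (simp add: norm_vec_def)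
  finally show ?thesis .
qed

lemma Av: "(A - lam *\<^sub>R mat 1) *v x = A *v x - lam *\<^sub>R (x::real^'n)"
  by (simp add: matrix_vector_mult_diff_rdistrib scaleR_matrix_vector_assoc[symmetric])

lemma GB_inner:
  fixes A :: "'n::finite \<Rightarrow> real^'n^'n"
  assumes "x \<noteq> 0"
  shows "GB A x \<bullet> w = lam * norm x * (x \<bullet> w)
     + (\<Sum>i\<in>UNIV. (x \<bullet> ((A i - lam *\<^sub>R mat 1) *v x)) * x$i * w$i) / norm x"
proof -
  have n: "norm x > 0" using assms by simp
  have e: "x \<bullet> (A i *v x) = x \<bullet> ((A i - lam *\<^sub>R mat 1) *v x) + lam * (norm x)^2" for i
    by (simp add: Av inner_diff_right power2_norm_eq_inner)
  have "GB A x \<bullet> w = (\<Sum>i\<in>UNIV. (x \<bullet> (A i *v x)) * x$i * w$i) / norm x"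
    using assms by (simp add: GB_def Bmap_def inner_vec_def sum_divide_distrib mult.assoc)
  also have "\<dots> = (\<Sum>i\<in>UNIV. lam * (norm x)^2 * (x$i * w$i) + (x \<bullet> ((A i - lam *\<^sub>R mat 1) *v x)) * x$i * w$i) / norm x"
    by (rule arg_cong[where f="\<lambda>s. s / norm x"], rule sum.cong, simp_all only: e, simp add: ring_distribs mult.assoc)
  also have "\<dots> = (lam * (norm x)^2 * (x \<bullet> w) + (\<Sum>i\<in>UNIV. (x \<bullet> ((A i - lam *\<^sub>R mat 1) *v x)) * x$i * w$i)) / norm x"
    by (simp only: sum.distrib sum_distrib_left[symmetric] inner_vec_def inner_real_def)
  also have "\<dots> = lam * norm x * (x \<bullet> w) + (\<Sum>i\<in>UNIV. (x \<bullet> ((A i - lam *\<^sub>R mat 1) *v x)) * x$i * w$i) / norm x"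
    using n by (simp add: add_divide_distrib power2_eq_square)
  finally show ?thesis .
qed

lemma GB_hom: "GB A (c *\<^sub>R x) = (c * \<bar>c\<bar>) *\<^sub>R GB A x"
proof (cases "c = 0 \<or> x = 0")
  case True then show ?thesis by (auto simp: GB_def)
next
  case False
  then have "c \<noteq> 0" "x \<noteq> 0" by auto
  have "Bmap A (c *\<^sub>R x) (c *\<^sub>R x) (c *\<^sub>R x) = (c*c*c) *\<^sub>R Bmap A x x x"
    by (simp add: Bmap_def vec_eq_iff matrix_vector_mult_scaleR)
  moreover have "c*c*c / (\<bar>c\<bar> * norm x) = c * \<bar>c\<bar> / norm x" using \<open>c \<noteq> 0\<close> \<open>x \<noteq> 0\<close>
    by (cases "c > 0") (auto simp: divide_simps)
  ultimately show ?thesis using False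
    by (simp add: GB_def)
qed

lemma sum_bound1:
  fixes x w :: "real^'n"
  assumes "\<And>i. \<bar>q i\<bar> \<le> e * (norm x)^2" "e \<ge> 0"
  shows "\<bar>\<Sum>i\<in>UNIV. q i * x$i * w$i\<bar> \<le> e * (norm x)^2 * (norm x * norm w)"
proof -
  have "\<bar>\<Sum>i\<in>UNIV. q i * x$i * w$i\<bar> \<le> (\<Sum>i\<in>UNIV. \<bar>q i * x$i * w$i\<bar>)" by (rule sum_abs)
  also have "\<dots> \<le> (\<Sum>i\<in>UNIV. e * (norm x)^2 * (\<bar>x$i\<bar> * \<bar>w$i\<bar>))"
  proof (rule sum_mono)
    fix i
    have "\<bar>q i * x$i * w$i\<bar> = \<bar>q i\<bar> * (\<bar>x$i\<bar> * \<bar>w$i\<bar>)" by (simp add: abs_mult)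
    also have "\<dots> \<le> e * (norm x)^2 * (\<bar>x$i\<bar> * \<bar>w$i\<bar>)"
      by (rule mult_right_mono[OF assms(1)]) simp
    finally show "\<bar>q i * x$i * w$i\<bar> \<le> e * (norm x)^2 * (\<bar>x$i\<bar> * \<bar>w$i\<bar>)" .
  qed
  also have "\<dots> = e * (norm x)^2 * (\<Sum>i\<in>UNIV. \<bar>x$i\<bar> * \<bar>w$i\<bar>)" by (simp add: sum_distrib_left)
  also have "\<dots> \<le> e * (norm x)^2 * (norm x * norm w)"
    by (rule mult_left_mono[OF cs_abs]) (simp add: assms)
  finally show ?thesis .
qed

lemma sum_bound2:
  fixes x w :: "real^'n"
  assumes "\<And>i. \<bar>q i\<bar> \<le> e * (norm x)^2" "\<And>i. \<bar>r i\<bar> \<le> 2 * e * norm x * norm w" "e \<ge> 0"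
  shows "\<bar>\<Sum>i\<in>UNIV. (r i * x$i + w$i * q i) * w$i\<bar> \<le> 3 * e * (norm x)^2 * (norm w)^2"
proof -
  have "\<bar>\<Sum>i\<in>UNIV. (r i * x$i + w$i * q i) * w$i\<bar> \<le> (\<Sum>i\<in>UNIV. \<bar>(r i * x$i + w$i * q i) * w$i\<bar>)" by (rule sum_abs)
  also have "\<dots> \<le> (\<Sum>i\<in>UNIV. 2 * e * norm x * norm w * (\<bar>x$i\<bar> * \<bar>w$i\<bar>) + e * (norm x)^2 * (w$i * w$i))"
  proof (rule sum_mono)
    fix i
    have "\<bar>(r i * x$i + w$i * q i) * w$i\<bar> \<le> \<bar>r i\<bar> * (\<bar>x$i\<bar> * \<bar>w$i\<bar>) + \<bar>q i\<bar> * (w$i * w$i)"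
      by (simp add: abs_mult distrib_right abs_triangle_ineq[THEN order_trans] algebra_simps
            order_trans[OF abs_triangle_ineq])
    also have "\<dots> \<le> 2 * e * norm x * norm w * (\<bar>x$i\<bar> * \<bar>w$i\<bar>) + e * (norm x)^2 * (w$i * w$i)"
      by (rule add_mono; rule mult_right_mono) (simp_all add: assms)
    finally show "\<bar>(r i * x$i + w$i * q i) * w$i\<bar> \<le> 2 * e * norm x * norm w * (\<bar>x$i\<bar> * \<bar>w$i\<bar>) + e * (norm x)^2 * (w$i * w$i)" .
  qed
  also have "\<dots> = 2 * e * norm x * norm w * (\<Sum>i\<in>UNIV. \<bar>x$i\<bar> * \<bar>w$i\<bar>) + e * (norm x)^2 * (w \<bullet> w)"
    by (simp add: sum.distrib sum_distrib_left inner_vec_def)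
  also have "\<dots> \<le> 2 * e * norm x * norm w * (norm x * norm w) + e * (norm x)^2 * (norm w)^2"
    by (rule add_mono, rule mult_left_mono[OF cs_abs]) (simp_all add: assms power2_norm_eq_inner)
  also have "\<dots> = 3 * e * (norm x)^2 * (norm w)^2" by (simp add: power2_eq_square algebra_simps)
  finally show ?thesis .
qed

lemma real_key:
  fixes N W P S S' e lam :: real
  assumes "N > 0" "W \<ge> 0" "e \<ge> 0" "4 * e \<le> lam"
    "\<bar>S\<bar> \<le> e * N^2 * (N * W)" "\<bar>S'\<bar> \<le> 3 * e * N^2 * W^2" "\<bar>P\<bar> \<le> N * W"
  shows "0 \<le> lam * (P / N * P + W^2 * N) + (S' * N - S * (P / N)) / (N * N)"
proof -
  have "\<bar>S * P\<bar> \<le> (e * N^2 * (N * W)) * (N * W)"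
    unfolding abs_mult by (rule mult_mono) (use assms in auto)
  hence sp: "S * P \<le> e * N^4 * W^2" by (simp add: power2_eq_square power4_eq_xxxx algebra_simps)
  have s': "S' * N \<ge> - 3 * e * N^3 * W^2"
  proof -
    have "\<bar>S' * N\<bar> \<le> 3 * e * N^2 * W^2 * N" unfolding abs_mult
      using assms(1,6) by (simp add: mult_right_mono)
    thus ?thesis by (simp add: power2_eq_square power3_eq_cube algebra_simps)
  qed
  have eq: "(S' * N - S * (P / N)) / (N * N) = (S' * N * N - S * P) / (N^3)"
    using assms(1) by (simp add: field_simps power3_eq_cube)
  have "(S' * N * N - S * P) \<ge> - 4 * e * N^4 * W^2"
  proof -
    have "S' * N * N \<ge> - 3 * e * N^3 * W^2 * N" using s' assms(1) mult_right_mono[OF s', of N] by simp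
    thus ?thesis using sp by (simp add: power4_eq_xxxx power3_eq_cube algebra_simps)
  qed
  hence "(- 4 * e * N^4 * W^2) / N^3 \<le> (S' * N * N - S * P) / N^3"
    using assms(1) by (intro divide_right_mono) auto
  moreover have "(- 4 * e * N^4 * W^2) / N^3 = - 4 * e * N * W^2"
    using assms(1) by (simp add: power4_eq_xxxx power3_eq_cube)
  ultimately have t: "(S' * N - S * (P / N)) / (N * N) \<ge> - 4 * e * N * W^2"
    unfolding eq by simp
  have "lam * (P / N * P) \<ge> 0" using assms by (simp add: mult_nonneg_nonneg)
  moreover have "lam * (W^2 * N) \<ge> 4 * e * N * W^2"
  proof -
    have "4 * e * W^2 * N \<le> lam * W^2 * N" using assms by (intro mult_right_mono) auto
    thus ?thesis by (simp add: algebra_simps)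
  qed
  ultimately show ?thesis using t by (simp add: distrib_left)
qed

lemma mono_main:
  fixes A :: "'n::finite \<Rightarrow> real^'n^'n" and lam :: real
  assumes lam: "lam \<ge> 0" and bnd: "\<And>i. op_norm (A i - lam *\<^sub>R mat 1) \<le> lam / 4"
  shows "(GB A u - GB A v) \<bullet> (u - v) \<ge> 0"
proof -
  define E where "E i = A i - lam *\<^sub>R mat 1" for i
  define e where "e = lam / 4"
  have e0: "e \<ge> 0" and le: "4 * e \<le> lam" using lam by (auto simp: e_def)
  have Eb: "op_norm (E i) \<le> e" for i using bnd by (simp add: E_def e_def)
  have qb: "\<bar>x \<bullet> (E i *v y)\<bar> \<le> e * norm x * norm y" for x y i using qf[OF Eb] .
  have qb2: "\<bar>x \<bullet> (E i *v x)\<bar> \<le> e * (norm x)^2" for x i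
    using qb[of x i x] by (simp add: power2_eq_square mult.assoc)
  have GBi: "GB A x \<bullet> w = lam * norm x * (x \<bullet> w) + (\<Sum>i\<in>UNIV. (x \<bullet> (E i *v x)) * x$i * w$i) / norm x"
    if "x \<noteq> 0" for x w
    using GB_inner[OF that, of A w lam] by (simp add: E_def)
  have nonneg: "GB A z \<bullet> z \<ge> 0" for z
  proof (cases "z = 0")
    case False
    have N: "norm z > 0" using False by simp
    have sb: "\<bar>\<Sum>i\<in>UNIV. (z \<bullet> (E i *v z)) * z$i * z$i\<bar> \<le> e * (norm z)^2 * (norm z * norm z)"
      by (rule sum_bound1[OF qb2 e0])
    define T where "T = (\<Sum>i\<in>UNIV. (z \<bullet> (E i *v z)) * z$i * z$i)"
    have "T \<ge> - (e * (norm z)^2 * (norm z * norm z))" using sb by (simp add: T_def)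
    hence "T / norm z \<ge> - (e * (norm z)^2 * (norm z * norm z)) / norm z"
      using N by (intro divide_right_mono) auto
    hence t: "T / norm z \<ge> - (e * (norm z)^3)" using N by (simp add: power2_eq_square power3_eq_cube)
    have "lam * norm z * (z \<bullet> z) \<ge> 4 * (e * (norm z)^3)"
    proof -
      have "4 * e * (norm z)^3 \<le> lam * (norm z)^3" using le by (intro mult_right_mono) auto
      thus ?thesis by (simp add: power2_norm_eq_inner[symmetric] power2_eq_square power3_eq_cube algebra_simps)
    qed
    moreover have "GB A z \<bullet> z = lam * norm z * (z \<bullet> z) + T / norm z" using GBi[OF False] by (simp add: T_def)
    moreover have "e * (norm z)^3 \<ge> 0" using e0 by simp
    ultimately show ?thesis using t by linarith
  qed (simp add: GB_def)
  define w where "w = u - v"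
  have uvw: "u - v = w" by (simp add: w_def)
  show ?thesis
  proof (cases "\<exists>t\<in>{0..1}. v + t *\<^sub>R w = 0")
    case True
    then obtain t0 where t0: "t0 \<in> {0..1}" "v + t0 *\<^sub>R w = 0" by auto
    hence v: "v = (- t0) *\<^sub>R w" by (simp add: add_eq_0_iff2)
    have "u = v + w" by (simp add: w_def)
    also have "\<dots> = (1 - t0) *\<^sub>R w" by (simp add: v algebra_simps)
    finally have u: "u = (1 - t0) *\<^sub>R w" .
    have "(GB A u - GB A v) \<bullet> (u - v) = ((1 - t0) * \<bar>1 - t0\<bar> - (- t0) * \<bar>- t0\<bar>) * (GB A w \<bullet> w)"
      unfolding uvw by (simp only: u v GB_hom inner_diff_left inner_scaleR_left left_diff_distrib)
    also have "\<dots> \<ge> 0" using t0(1) nonneg[of w] by (intro mult_nonneg_nonneg) auto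
    finally show ?thesis .
  next
    case False
    hence nz: "\<And>t. t \<in> {0..1} \<Longrightarrow> v + t *\<^sub>R w \<noteq> 0" by auto
    define a where "a i = v \<bullet> (E i *v v)" for i
    define b where "b i = w \<bullet> (E i *v v) + v \<bullet> (E i *v w)" for i
    define c where "c i = w \<bullet> (E i *v w)" for i
    define D where "D t = v \<bullet> v + 2 * t * (v \<bullet> w) + t^2 * (w \<bullet> w)" for t
    define P where "P t = v \<bullet> w + t * (w \<bullet> w)" for t
    define Q where "Q i t = a i + b i * t + c i * t^2" for i t
    define S where "S t = (\<Sum>i\<in>UNIV. Q i t * (v$i + t * w$i) * w$i)" for t
    define S' where "S' t = (\<Sum>i\<in>UNIV. ((b i + 2 * c i * t) * (v$i + t * w$i) + w$i * Q i t) * w$i)" for t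
    define N where "N t = sqrt (D t)" for t
    define g where "g t = lam * (N t * P t) + S t / N t" for t
    define g' where "g' t = lam * (P t / N t * P t + (w \<bullet> w) * N t) + (S' t * N t - S t * (P t / N t)) / (N t * N t)" for t
    have Dx: "D t = (v + t *\<^sub>R w) \<bullet> (v + t *\<^sub>R w)" for t
      by (simp add: D_def inner_add_left inner_add_right inner_commute[of w v] power2_eq_square algebra_simps)
    have Nx: "N t = norm (v + t *\<^sub>R w)" for t by (simp add: N_def Dx norm_eq_sqrt_inner)
    have Px: "P t = (v + t *\<^sub>R w) \<bullet> w" for t by (simp add: P_def inner_add_left)
    have Qx: "Q i t = (v + t *\<^sub>R w) \<bullet> (E i *v (v + t *\<^sub>R w))" for i t
      by (simp add: Q_def a_def b_def c_def matrix_vector_right_distrib matrix_vector_mult_scaleR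
          inner_add_left inner_add_right power2_eq_square algebra_simps)
    have Bx: "b i + 2 * c i * t = w \<bullet> (E i *v (v + t *\<^sub>R w)) + (v + t *\<^sub>R w) \<bullet> (E i *v w)" for i t
      by (simp add: b_def c_def matrix_vector_right_distrib matrix_vector_mult_scaleR
          inner_add_left inner_add_right algebra_simps)
    have Xx: "v$i + t * w$i = (v + t *\<^sub>R w)$i" for i t by simp
    have gx: "g t = GB A (v + t *\<^sub>R w) \<bullet> w" if "t \<in> {0..1}" for t
      unfolding GBi[OF nz[OF that]] g_def S_def Nx Px Qx Xx
      by (simp only: mult.assoc)
    have dD: "(D has_real_derivative 2 * P t) (at t)" for t
      unfolding D_def[abs_def] P_def by (auto intro!: derivative_eq_intros simp: algebra_simps)
    have dN: "(N has_real_derivative P t / N t) (at t)" if "t \<in> {0..1}" for t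
    proof -
      have Dp: "D t > 0" using nz[OF that] by (simp add: Dx)
      have "((\<lambda>t. sqrt (D t)) has_real_derivative (inverse (sqrt (D t)) / 2) * (2 * P t)) (at t)"
        by (rule DERIV_chain2[OF DERIV_real_sqrt[OF Dp] dD])
      thus ?thesis by (simp add: N_def[abs_def] field_simps)
    qed
    have dP: "(P has_real_derivative (w \<bullet> w)) (at t)" for t
      unfolding P_def[abs_def] by (auto intro!: derivative_eq_intros)
    have dS: "(S has_real_derivative S' t) (at t)" for t
      unfolding S_def[abs_def] S'_def
    proof (rule DERIV_sum)
      fix i :: 'n
      show "((\<lambda>x. Q i x * (v $ i + x * w $ i) * w $ i) has_real_derivative
          ((b i + 2 * c i * t) * (v $ i + t * w $ i) + w $ i * Q i t) * w $ i) (at t)"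
        unfolding Q_def by (auto intro!: derivative_eq_intros simp: algebra_simps power2_eq_square)
    qed
    have dg: "(g has_real_derivative g' t) (at t)" if "t \<in> {0..1}" for t
    proof -
      have Np: "N t \<noteq> 0" using nz[OF that] by (simp add: Nx)
      have "((\<lambda>t. lam * (N t * P t) + S t / N t) has_real_derivative
         lam * (P t / N t * P t + (w \<bullet> w) * N t) + (S' t * N t - S t * (P t / N t)) / (N t * N t)) (at t)"
        by (intro Deriv.field_differentiable_add DERIV_cmult DERIV_mult DERIV_divide dN[OF that] dP dS Np)
      thus ?thesis by (simp add: g_def[abs_def] g'_def)
    qed
    have g'nn: "g' t \<ge> 0" if "t \<in> {0..1}" for t
    proof -
      define x where "x = v + t *\<^sub>R w"
      have xn: "norm x > 0" using nz[OF that] by (simp add: x_def)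
      have s1: "\<bar>S t\<bar> \<le> e * (norm x)^2 * (norm x * norm w)"
        unfolding S_def Qx Xx x_def[symmetric] by (rule sum_bound1[OF qb2 e0])
      have rb: "\<bar>w \<bullet> (E i *v x) + x \<bullet> (E i *v w)\<bar> \<le> 2 * e * norm x * norm w" for i
      proof -
        have h1: "\<bar>w \<bullet> (E i *v x)\<bar> \<le> e * norm x * norm w" using qb[of w i x] by (simp add: mult_ac)
        have h2: "\<bar>x \<bullet> (E i *v w)\<bar> \<le> e * norm x * norm w" using qb[of x i w] by simp
        show ?thesis using h1 h2 abs_triangle_ineq[of "w \<bullet> (E i *v x)" "x \<bullet> (E i *v w)"] by linarith
      qed
      have s2: "\<bar>S' t\<bar> \<le> 3 * e * (norm x)^2 * (norm w)^2"
        unfolding S'_def Qx Xx Bx x_def[symmetric] by (rule sum_bound2[OF qb2 rb e0])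
      have pb: "\<bar>P t\<bar> \<le> norm x * norm w" unfolding Px x_def[symmetric] by (rule Cauchy_Schwarz_ineq2)
      have "0 \<le> lam * (P t / norm x * P t + (norm w)^2 * norm x) + (S' t * norm x - S t * (P t / norm x)) / (norm x * norm x)"
        by (rule real_key[OF xn _ e0 le s1 s2 pb]) simp
      thus ?thesis by (simp add: g'_def Nx x_def[symmetric] power2_norm_eq_inner)
    qed
    have "g 0 \<le> g 1"
      by (rule deriv_nonneg_imp_mono[of 0 1 g g']) (use dg g'nn in auto)
    hence "GB A v \<bullet> w \<le> GB A u \<bullet> w" using gx[of 0] gx[of 1] by (simp add: w_def)
    thus ?thesis unfolding uvw by (simp add: inner_diff_left)
  qed
qed

lemma p_ineq:
  fixes u v :: "real^'n"
  shows "norm u * (u \<bullet> (u - v)) - norm v * (v \<bullet> (u - v)) \<ge> (norm (u - v))^3 / 2"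
proof -
  define a where "a = norm u"
  define b where "b = norm v"
  define c where "c = u \<bullet> v"
  define W where "W = norm (u - v)"
  have uw: "u \<bullet> (u - v) = a^2 - c" by (simp add: a_def c_def inner_diff_right power2_norm_eq_inner)
  have vw: "v \<bullet> (u - v) = c - b^2" by (simp add: b_def c_def inner_diff_right power2_norm_eq_inner inner_commute)
  have W2: "W^2 = a^2 + b^2 - 2 * c"
    by (simp add: W_def a_def b_def c_def power2_norm_eq_inner inner_diff_left inner_diff_right inner_commute)
  have a0: "a \<ge> 0" "b \<ge> 0" "W \<ge> 0" by (auto simp: a_def b_def W_def)
  have tri: "W \<le> a + b" unfolding W_def a_def b_def by (rule norm_triangle_ineq4)
  have id: "2 * (a * (a^2 - c) - b * (c - b^2)) = (a + b) * W^2 + (a + b) * (a - b)^2"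
    unfolding W2 by algebra
  have "(a + b) * (a - b)^2 \<ge> 0" using a0 by simp
  moreover have "(a + b) * W^2 \<ge> W * W^2"
    using tri a0 by (intro mult_right_mono) auto
  moreover have "W * W^2 = W^3" by (simp add: power2_eq_square power3_eq_cube)
  ultimately have "2 * (a * (a^2 - c) - b * (c - b^2)) \<ge> W^3" unfolding id by linarith
  hence "a * (a^2 - c) - b * (c - b^2) \<ge> W^3 / 2" by (simp add: field_simps)
  thus ?thesis unfolding uw vw by (simp add: a_def b_def W_def)
qed

theorem mainTheorem7:
  fixes A :: "'n::finite \<Rightarrow> real^'n^'n"
  assumes "CARD('n) \<ge> 2"
    and "\<And>i. A i \<noteq> 0"
  shows "((\<exists>lam>0. \<forall>i. op_norm (A i - lam *\<^sub>R mat 1) \<le> lam / 4) \<longrightarrow> monotone_map (GB A))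
    \<and> ((\<exists>lam>0. \<forall>i. op_norm (A i - lam *\<^sub>R mat 1) < lam / 4) \<longrightarrow> alpha_monotone 3 (GB A))"
proof (intro conjI impI)
  assume "\<exists>lam>0. \<forall>i. op_norm (A i - lam *\<^sub>R mat 1) \<le> lam / 4"
  then obtain lam where "lam > 0" "\<And>i. op_norm (A i - lam *\<^sub>R mat 1) \<le> lam / 4" by auto
  then show "monotone_map (GB A)" unfolding monotone_map_def
    using mono_main[of lam A] by auto
next
  assume "\<exists>lam>0. \<forall>i. op_norm (A i - lam *\<^sub>R mat 1) < lam / 4"
  then obtain lam where lam: "lam > 0" and b: "\<And>i. op_norm (A i - lam *\<^sub>R mat 1) < lam / 4" by auto
  define em where "em = Max (range (\<lambda>i. op_norm (A i - lam *\<^sub>R mat 1)))"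
  have emin: "op_norm (A i - lam *\<^sub>R mat 1) \<le> em" for i unfolding em_def by (rule Max_ge) auto
  have "em \<in> range (\<lambda>i. op_norm (A i - lam *\<^sub>R mat 1))" unfolding em_def by (rule Max_in) auto
  then have em4: "em < lam / 4" using b by auto
  have em0: "em \<ge> 0"
    using emin[of undefined] onorm_pos_le[of "\<lambda>x. (A undefined - lam *\<^sub>R mat 1) *v x"]
    by (simp add: op_norm_def)
  define mu where "mu = (lam - 4 * em) / 2"
  define lam' where "lam' = lam - mu"
  have mu0: "mu > 0" using em4 by (simp add: mu_def)
  have lam'0: "lam' \<ge> 0" using em0 lam by (simp add: lam'_def mu_def)
  define A' where "A' i = A i - mu *\<^sub>R mat 1" for i
  have AA: "A' i - lam' *\<^sub>R mat 1 = A i - lam *\<^sub>R mat 1" for i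
    by (simp add: A'_def lam'_def algebra_simps)
  have bnd': "op_norm (A' i - lam' *\<^sub>R mat 1) \<le> lam' / 4" for i
  proof -
    have "op_norm (A i - lam *\<^sub>R mat 1) \<le> lam' / 4"
    proof -
      have "em \<le> (lam - (lam - 4 * em) / 2) / 4" using em4 by (simp add: field_simps)
      thus ?thesis using emin[of i] unfolding lam'_def mu_def by (rule order_trans[rotated])
    qed
    thus ?thesis unfolding AA .
  qed
  have split: "GB A x \<bullet> w = GB A' x \<bullet> w + mu * (norm x * (x \<bullet> w))" for x w
  proof (cases "x = 0")
    case True then show ?thesis by (simp add: GB_def)
  next
    case False
    show ?thesis
      unfolding GB_inner[OF False, of A w lam] GB_inner[OF False, of A' w lam'] AA
      by (simp add: lam'_def algebra_simps)
  qed
  show "alpha_monotone 3 (GB A)" unfolding alpha_monotone_def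
  proof (intro exI[of _ "mu / 2"] conjI allI)
    show "mu / 2 > 0" using mu0 by simp
    fix u v :: "real^'n"
    have m: "(GB A' u - GB A' v) \<bullet> (u - v) \<ge> 0" by (rule mono_main[OF lam'0 bnd'])
    have p: "mu * (norm u * (u \<bullet> (u - v)) - norm v * (v \<bullet> (u - v))) \<ge> mu * ((norm (u - v))^3 / 2)"
      using mu0 p_ineq[of u v] by (intro mult_left_mono) auto
    have "(GB A u - GB A v) \<bullet> (u - v) = (GB A' u - GB A' v) \<bullet> (u - v)
       + mu * (norm u * (u \<bullet> (u - v)) - norm v * (v \<bullet> (u - v)))"
      by (simp add: inner_diff_left split algebra_simps)
    moreover have "mu / 2 * norm (u - v) powr 3 = mu * ((norm (u - v))^3 / 2)" by simp
    ultimately show "(GB A u - GB A v) \<bullet> (u - v) \<ge> mu / 2 * norm (u - v) powr 3"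
      using m p by linarith
  qed
qed

end
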